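(* Let $\ell,m,n$ be positive integers with $\ell<n$, $m<n$, $\gcd(m,n)=1$, let $k\in\mathbb{Z}^+$ and $\chi\in\mathbb{Z}$ with $|\chi|<k$, and put $\tilde\ell=\ell_k^\pm+\chi$. Then $$\tilde\ell\,d_k^\pm\bmod n_k^\pm=\big((\ell d\bmod n)\pm\chi n\big)\bmod n_k^\pm,$$ with the same choice of sign throughout.
   Context: $d\in\{1,\dots,n-1\}$ is the inverse of $m$ mod $n$. The left and right Farey roots of $\frac mn$ are the fractions $\frac{m^-}{n^-}<\frac{m^+}{n^+}$ with $m^\pm\ge0$, $n^\pm\ge1$, $m^-+m^+=m$, $n^-+n^+=n$, $m^+n^--m^-n^+=1$. Put $\ell^+=\lceil\ell n^+/n\rceil$, $\ell^-=\lfloor\ell n^-/n\rfloor$, $\ell_k^\pm=k\ell+\ell^\pm$, $m_k^\pm=km+m^\pm$, $n_k^\pm=kn+n^\pm$, and let $d_k^\pm$ be the multiplicative inverse of $m_k^\pm$ modulo $n_k^\pm$. *)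

theory Defs
  imports Complex_Main "HOL-Number_Theory.Cong"
begin

text \<open>Left Farey root mm/nm and right Farey root mp/np of m/n.\<close>
definition farey_roots :: "int \<Rightarrow> int \<Rightarrow> int \<Rightarrow> int \<Rightarrow> int \<Rightarrow> int \<Rightarrow> bool" where
  "farey_roots m n mm nm mp np \<longleftrightarrow>
     mm \<ge> 0 \<and> mp \<ge> 0 \<and> nm \<ge> 1 \<and> np \<ge> 1 \<and> mm + mp = m \<and> nm + np = n \<and>
     mp * nm - mm * np = 1 \<and>
     real_of_int mm / real_of_int nm < real_of_int mp / real_of_int np"

definition is_inv_mod :: "int \<Rightarrow> int \<Rightarrow> int \<Rightarrow> bool" where
  "is_inv_mod a n b \<longleftrightarrow> b \<in> {1..n-1} \<and> [a * b = 1] (mod n)"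

end

theory Submission
  imports Defs
begin

lemma aux_mod:
  fixes L X M N c dp :: int
  assumes "L = X * M + c * N" "[M * dp = 1] (mod N)"
  shows "(L * dp) mod N = X mod N"
proof -
  obtain s where s: "1 = M * dp + N * s" using assms(2) cong_iff_lin by blast
  have h: "L * dp - (X + N * (c * dp - X * s)) = X * (M * dp + N * s - 1)"
    using assms(1) by (simp add: algebra_simps)
  have "L * dp = X + N * (c * dp - X * s)"
    using h s by simp
  thus ?thesis by simp
qed

theorem lemma3p6:
  fixes l m n k \<chi> d mm nm mp np dp dm :: int
  assumes "0 < l" "0 < m" "0 < n" "l < n" "m < n" "gcd m n = 1"
    and "0 < k" "\<bar>\<chi>\<bar> < k"
    and "is_inv_mod m n d"
    and "farey_roots m n mm nm mp np"
    and "is_inv_mod (k * m + mp) (k * n + np) dp"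
    and "is_inv_mod (k * m + mm) (k * n + nm) dm"
  shows "((k * l + \<lceil>real_of_int (l * np) / real_of_int n\<rceil> + \<chi>) * dp) mod (k * n + np)
           = ((l * d mod n) + \<chi> * n) mod (k * n + np)
       \<and> ((k * l + \<lfloor>real_of_int (l * nm) / real_of_int n\<rfloor> + \<chi>) * dm) mod (k * n + nm)
           = ((l * d mod n) - \<chi> * n) mod (k * n + nm)"
proof -
  define r where "r = l * d mod n"
  have r0: "0 \<le> r" "r < n" using assms(3) by (auto simp: r_def)
  have md: "(m * d) mod n = 1 mod n" using assms(9) by (simp add: is_inv_mod_def cong_def)
  have "(r * m) mod n = (l * d * m) mod n"
    unfolding r_def by (rule mod_mult_left_eq)
  also have "\<dots> = (l * (m * d)) mod n" by (simp add: ac_simps)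
  also have "\<dots> = (l * ((m * d) mod n)) mod n" by (simp add: mod_mult_right_eq)
  also have "\<dots> = l mod n" using md by (simp add: mod_mult_right_eq)
  finally have "n dvd r * m - l" by (simp add: mod_eq_dvd_iff)
  then obtain t where t0': "r * m - l = n * t" by (erule dvdE)
  hence t: "r * m = l + t * n" by (simp add: algebra_simps)
  have F: "mm + mp = m" "nm + np = n" "mp * nm - mm * np = 1"
    using assms(10) by (auto simp: farey_roots_def)
  have e1: "n * mp - m * np - 1 = 0" using F by (auto simp: algebra_simps)
  have e2: "m * nm - n * mm - 1 = 0" using F by (auto simp: algebra_simps)
  have t0: "r * m - l - t * n = 0" using t by simp
  define q where "q = r * mp - t * np"
  define q' where "q' = r * mm - t * nm"
  have "q * n - (r + l * np) = r * (n * mp - m * np - 1) + np * (r * m - l - t * n)"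
    unfolding q_def by algebra
  hence qn: "q * n = r + l * np" using e1 t0 by simp
  have "q' * n - (l * nm - r) = - r * (m * nm - n * mm - 1) + nm * (r * m - l - t * n)"
    unfolding q'_def by algebra
  hence qn': "q' * n = l * nm - r" using e2 t0 by simp
  have nr: "real_of_int n > 0" using assms(3) by simp
  have rr: "real_of_int r < real_of_int n" "0 \<le> real_of_int r" using r0 by auto
  have qr: "real_of_int q * real_of_int n = real_of_int r + real_of_int (l * np)"
    using arg_cong[OF qn, of real_of_int] by simp
  have qr': "real_of_int q' * real_of_int n = real_of_int (l * nm) - real_of_int r"
    using arg_cong[OF qn', of real_of_int] by simp
  have c: "\<lceil>real_of_int (l * np) / real_of_int n\<rceil> = q"
  proof (rule ceiling_unique)
    have "(real_of_int q - 1) * real_of_int n < real_of_int (l * np)"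
      using qr rr by (simp add: left_diff_distrib)
    thus "real_of_int q - 1 < real_of_int (l * np) / real_of_int n"
      using nr by (simp add: pos_less_divide_eq)
    have "real_of_int (l * np) \<le> real_of_int q * real_of_int n"
      using qr rr by linarith
    thus "real_of_int (l * np) / real_of_int n \<le> real_of_int q"
      using nr by (simp add: pos_divide_le_eq)
  qed
  have f: "\<lfloor>real_of_int (l * nm) / real_of_int n\<rfloor> = q'"
  proof (rule floor_unique)
    have "real_of_int q' * real_of_int n \<le> real_of_int (l * nm)"
      using qr' rr by linarith
    thus "real_of_int q' \<le> real_of_int (l * nm) / real_of_int n"
      using nr by (simp add: pos_le_divide_eq)
    have "real_of_int (l * nm) < (real_of_int q' + 1) * real_of_int n"
      using qr' rr by (simp add: distrib_right)
    thus "real_of_int (l * nm) / real_of_int n < real_of_int q' + 1"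
      using nr by (simp add: pos_divide_less_eq)
  qed
  have "(r + \<chi> * n) * (k * m + mp) + (- (t + \<chi> * m)) * (k * n + np) - (k * l + q + \<chi>)
      = k * (r * m - l - t * n) + \<chi> * (n * mp - m * np - 1)"
    unfolding q_def by algebra
  hence L1: "k * l + q + \<chi> = (r + \<chi> * n) * (k * m + mp) + (- (t + \<chi> * m)) * (k * n + np)"
    using e1 t0 by simp
  have "(r - \<chi> * n) * (k * m + mm) + (- (t - \<chi> * m)) * (k * n + nm) - (k * l + q' + \<chi>)
      = k * (r * m - l - t * n) + \<chi> * (m * nm - n * mm - 1)"
    unfolding q'_def by algebra
  hence L2: "k * l + q' + \<chi> = (r - \<chi> * n) * (k * m + mm) + (- (t - \<chi> * m)) * (k * n + nm)"
    using e2 t0 by simp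
  have i1: "[(k * m + mp) * dp = 1] (mod (k * n + np))" using assms(11) by (simp add: is_inv_mod_def)
  have i2: "[(k * m + mm) * dm = 1] (mod (k * n + nm))" using assms(12) by (simp add: is_inv_mod_def)
  show ?thesis
    unfolding c f r_def[symmetric]
    using aux_mod[OF L1 i1] aux_mod[OF L2 i2] by simp
qed

end
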